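(* Let $\ell\ge 1$, let $R$ be a path in $H_\ell$ and let $h\in\{1,\dots,\ell\}$. Then there are at most $2$ vertices $v_{h',j}$ with $|h'|=h$ that are turn vertices of $R$.
   Context: For an integer $\ell\ge 1$, $H_\ell$ is the graph with vertex set $V_\ell=\{v_{h,j} : h\in\{-\ell,\dots,\ell\},\ j\in\{1,\dots,2^{\ell-|h|}\}\}$ and with the following edges: (1) $v_{h,j}v_{h-1,2j-1}$ and $v_{h,j}v_{h-1,2j}$ for every $h\in\{1,\dots,\ell\}$ and $j\in\{1,\dots,2^{\ell-h}\}$; (2) $v_{h,j}v_{h+1,2j-1}$ and $v_{h,j}v_{h+1,2j}$ for every $h\in\{-\ell,\dots,-1\}$ and $j\in\{1,\dots,2^{\ell-|h|}\}$; (3) the edge $v_{\ell,1}v_{-\ell,1}$; (4) the edges $v_{0,2j-1}v_{0,2j}$ for every $j\in\{1,\dots,2^{\ell-1}\}$. For a path $R$ in $H_\ell$ and a vertex $v_{h,k}$ of $R$, let $\deg_R(v_{h,k})$ be its degree in $R$. The vertex $v_{h,k}$ is a turn vertex of $R$ if $h\neq 0$, $\deg_R(v_{h,k})=2$, and its two neighbours on $R$ are $v_{h',2k-1}$ and $v_{h',2k}$, where $h'=h-1$ if $h>0$ and $h'=h+1$ if $h<0$ (i.e., both path-neighbours are its two children in its tree). *)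

theory Defs
  imports Main
begin

text \<open>Vertex v_{h,j} of H_l is represented as the pair (h, j) :: int \<times> nat.\<close>

type_synonym hvert = "int \<times> nat"

definition H_vert :: "nat \<Rightarrow> hvert set" where
  "H_vert l = {(h, j). - int l \<le> h \<and> h \<le> int l \<and> 1 \<le> j \<and> j \<le> 2 ^ (l - nat \<bar>h\<bar>)}"

definition H_child :: "nat \<Rightarrow> hvert \<Rightarrow> hvert \<Rightarrow> bool" where
  "H_child l p c \<longleftrightarrow> p \<in> H_vert l \<and>
     ((1 \<le> fst p \<and> fst p \<le> int l \<and> fst c = fst p - 1) \<or>
      (- int l \<le> fst p \<and> fst p \<le> -1 \<and> fst c = fst p + 1)) \<and>
     (snd c = 2 * snd p - 1 \<or> snd c = 2 * snd p)"

definition H_adj :: "nat \<Rightarrow> hvert \<Rightarrow> hvert \<Rightarrow> bool" where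
  "H_adj l u v \<longleftrightarrow>
     H_child l u v \<or> H_child l v u \<or>
     {u, v} = {(int l, 1), (- int l, 1)} \<or>
     (\<exists>j. 1 \<le> j \<and> j \<le> 2 ^ (l - 1) \<and> {u, v} = {(0, 2 * j - 1), (0, 2 * j)})"

definition H_path :: "nat \<Rightarrow> hvert list \<Rightarrow> bool" where
  "H_path l R \<longleftrightarrow> R \<noteq> [] \<and> distinct R \<and> set R \<subseteq> H_vert l \<and>
     (\<forall>i. Suc i < length R \<longrightarrow> H_adj l (R ! i) (R ! Suc i))"

definition path_nbrs :: "'a list \<Rightarrow> 'a \<Rightarrow> 'a set" where
  "path_nbrs R v = {R ! Suc i | i. Suc i < length R \<and> R ! i = v}
                 \<union> {R ! i | i. Suc i < length R \<and> R ! Suc i = v}"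

definition path_deg :: "'a list \<Rightarrow> 'a \<Rightarrow> nat" where
  "path_deg R v = card (path_nbrs R v)"

definition turn_vertex :: "hvert list \<Rightarrow> hvert \<Rightarrow> bool" where
  "turn_vertex R v \<longleftrightarrow> v \<in> set R \<and> fst v \<noteq> 0 \<and> path_deg R v = 2 \<and>
     (let h' = (if fst v > 0 then fst v - 1 else fst v + 1) in
      path_nbrs R v = {(h', 2 * snd v - 1), (h', 2 * snd v)})"

end

theory Submission imports Defs begin

definition blk :: "nat \<Rightarrow> hvert \<Rightarrow> nat" where
  "blk h x = (snd x - 1) div 2 ^ (h - nat \<bar>fst x\<bar>)"
definition inQ :: "nat \<Rightarrow> nat \<Rightarrow> hvert \<Rightarrow> bool" where
  "inQ h c x \<longleftrightarrow> \<bar>fst x\<bar> \<le> int h \<and> blk h x = c"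

lemma half_lemma: "(q::nat) = 2 * p - 1 \<or> q = 2 * p \<Longrightarrow> (q - 1) div 2 = p - 1"
  by auto

lemma child_blk:
  assumes "H_child l p q" "\<bar>fst p\<bar> \<le> int h"
  shows "\<bar>fst q\<bar> \<le> int h \<and> blk h q = blk h p"
proof -
  have a: "nat \<bar>fst q\<bar> + 1 = nat \<bar>fst p\<bar>" and b: "\<bar>fst q\<bar> < \<bar>fst p\<bar>"
    using assms(1) by (auto simp: H_child_def)
  have c: "nat \<bar>fst p\<bar> \<le> h" using assms(2) by linarith
  have e: "h - nat \<bar>fst q\<bar> = Suc (h - nat \<bar>fst p\<bar>)" using a c by linarith
  have s: "(snd q - 1) div 2 = snd p - 1" using assms(1) unfolding H_child_def
    using half_lemma by blast
  have "blk h q = (snd q - 1) div (2 * 2 ^ (h - nat \<bar>fst p\<bar>))"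
    unfolding blk_def e by simp
  also have "\<dots> = blk h p" unfolding blk_def div_mult2_eq s ..
  finally show ?thesis using b assms(2) by simp
qed

lemma match_blk:
  assumes "1 \<le> h" "1 \<le> (j::nat)"
  shows "(2 * j - 1 - 1) div 2 ^ h = (2 * j - 1) div 2 ^ h"
proof -
  have "(2::nat) ^ h = 2 * 2 ^ (h - 1)" using assms(1) by (cases h) auto
  moreover have "(2 * j - 1 - 1) div 2 = (2 * j - 1) div 2" using assms(2) by (cases j) auto
  ultimately show ?thesis by (metis div_mult2_eq)
qed

lemma cross:
  assumes "x \<in> H_vert l" "y \<in> H_vert l" "1 \<le> h" "h \<le> l"
    "H_adj l x y \<or> H_adj l y x" "inQ h c x" "\<not> inQ h c y"
  shows "\<bar>fst x\<bar> = int h"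
proof -
  have adj: "H_adj l x y" using assms(5) unfolding H_adj_def by (auto simp: insert_commute)
  show ?thesis
  proof (rule ccontr)
    assume ne: "\<bar>fst x\<bar> \<noteq> int h"
    have xl: "\<bar>fst x\<bar> < int h" using ne assms(6) unfolding inQ_def by simp
    consider "H_child l x y" | "H_child l y x" | "{x, y} = {(int l, 1), (- int l, 1)}"
      | j where "1 \<le> j" "j \<le> 2 ^ (l - 1)" "{x, y} = {(0, 2 * j - 1), (0, 2 * j)}"
      using adj unfolding H_adj_def by blast
    then show False
    proof cases
      case 1
      then show False using child_blk[OF 1] assms(6,7) unfolding inQ_def by simp
    next
      case 2
      have "\<bar>fst y\<bar> \<le> int h" using 2 xl unfolding H_child_def by auto
      then show False using child_blk[OF 2] assms(6,7) unfolding inQ_def by simp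
    next
      case 3
      then show False using xl assms(4) by (auto simp: doubleton_eq_iff)
    next
      case 4
      have m: "(2 * j - 1 - 1) div 2 ^ h = (2 * j - 1) div 2 ^ h"
        using match_blk[OF assms(3) 4(1)] .
      from 4(3) have "(x = (0, 2*j-1) \<and> y = (0, 2*j)) \<or> (x = (0, 2*j) \<and> y = (0, 2*j-1))"
        by (auto simp: doubleton_eq_iff)
      then show False using m assms(6,7) unfolding inQ_def blk_def by auto
    qed
  qed
qed

lemma turn_nbrs:
  assumes "turn_vertex R t" "\<bar>fst t\<bar> = int h" "z \<in> path_nbrs R t"
  shows "inQ h (blk h t) z"
proof -
  have h1: "1 \<le> h" and t0: "fst t \<noteq> 0" using assms(1,2) unfolding turn_vertex_def by auto
  have bt: "blk h t = snd t - 1" unfolding blk_def using assms(2) by simp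
  have z: "z \<in> {(if fst t > 0 then fst t - 1 else fst t + 1, 2 * snd t - 1),
                  (if fst t > 0 then fst t - 1 else fst t + 1, 2 * snd t)}"
    using assms(1,3) unfolding turn_vertex_def Let_def by auto
  have fz: "\<bar>fst z\<bar> = int h - 1" using z assms(2) t0 by auto
  have ez: "h - nat \<bar>fst z\<bar> = 1" using fz h1 by linarith
  have sz: "(snd z - 1) div 2 = snd t - 1" using z half_lemma by auto
  show ?thesis unfolding inQ_def using fz ez sz bt by (simp add: blk_def)
qed

lemma turn_in_set: "turn_vertex R v \<Longrightarrow> v \<in> set R"
  by (simp add: turn_vertex_def)

lemma down: "\<not> f 0 \<Longrightarrow> f (p::nat) \<Longrightarrow> \<exists>i<p. \<not> f i \<and> f (Suc i)"
proof (induction p)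
  case 0 then show ?case by simp
next
  case (Suc p) then show ?case using less_SucI by (cases "f p") blast+
qed

lemma up: "f (p::nat) \<Longrightarrow> \<not> f q \<Longrightarrow> p < q \<Longrightarrow> \<exists>i. p \<le> i \<and> i < q \<and> f i \<and> \<not> f (Suc i)"
proof (induction q)
  case 0 then show ?case by simp
next
  case (Suc q)
  show ?case
  proof (cases "f q")
    case True then show ?thesis using Suc.prems by (intro exI[of _ q]) auto
  next
    case False
    then have "p < q" using Suc.prems by (metis less_SucE)
    then show ?thesis using Suc.IH[OF Suc.prems(1) False] by auto
  qed
qed

lemma nbr1: "Suc i < length R \<Longrightarrow> R ! i = t \<Longrightarrow> R ! Suc i \<in> path_nbrs R t"
  unfolding path_nbrs_def by blast
lemma nbr2: "Suc i < length R \<Longrightarrow> R ! Suc i = t \<Longrightarrow> R ! i \<in> path_nbrs R t"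
  unfolding path_nbrs_def by blast

lemma path_cross1:
  assumes "H_path l R" "1 \<le> h" "h \<le> l" "Suc i < length R"
    "inQ h c (R ! i)" "\<not> inQ h c (R ! Suc i)"
  shows "\<bar>fst (R ! i)\<bar> = int h"
proof -
  have "R ! i \<in> H_vert l" "R ! Suc i \<in> H_vert l" "H_adj l (R ! i) (R ! Suc i)"
    using assms(1,4) unfolding H_path_def by (auto dest: nth_mem)
  then show ?thesis using cross assms by blast
qed

lemma path_cross2:
  assumes "H_path l R" "1 \<le> h" "h \<le> l" "Suc i < length R"
    "\<not> inQ h c (R ! i)" "inQ h c (R ! Suc i)"
  shows "\<bar>fst (R ! Suc i)\<bar> = int h"
proof -
  have "R ! i \<in> H_vert l" "R ! Suc i \<in> H_vert l" "H_adj l (R ! i) (R ! Suc i)"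
    using assms(1,4) unfolding H_path_def by (auto dest: nth_mem)
  then show ?thesis using cross assms by blast
qed

lemma lvl_two:
  assumes "x \<in> H_vert l" "y \<in> H_vert l" "z \<in> H_vert l"
    "inQ h c x" "inQ h c y" "inQ h c z"
    "\<bar>fst x\<bar> = int h" "\<bar>fst y\<bar> = int h" "\<bar>fst z\<bar> = int h"
    "x \<noteq> z" "y \<noteq> z"
  shows "x = y"
proof -
  have "snd x = c + 1" "snd y = c + 1" "snd z = c + 1"
    using assms unfolding inQ_def blk_def H_vert_def by auto
  moreover have "fst x \<noteq> fst z" "fst y \<noteq> fst z" using assms(10,11) calculation
    by (auto simp: prod_eq_iff)
  moreover have "fst x = fst y" using assms(7-9) calculation(4,5) by arith
  ultimately show ?thesis by (simp add: prod_eq_iff)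
qed

lemma turn_inQ: "turn_vertex R t \<Longrightarrow> \<bar>fst t\<bar> = int h \<Longrightarrow> inQ h (blk h t) t"
  unfolding inQ_def by simp

lemma endpoint:
  assumes P: "H_path l R" and h: "1 \<le> h" "h \<le> l" and T: "turn_vertex R t" "\<bar>fst t\<bar> = int h"
  shows "inQ h (blk h t) (R ! 0) \<or> inQ h (blk h t) (R ! (length R - 1))"
proof (rule ccontr)
  assume A: "\<not> ?thesis"
  define c where "c = blk h t"
  define f where "f k = inQ h c (R ! k)" for k
  have dist: "distinct R" and sub: "set R \<subseteq> H_vert l" using P unfolding H_path_def by auto
  have "t \<in> set R" using T(1) by (rule turn_in_set)
  then obtain p where p: "p < length R" "R ! p = t" by (meson in_set_conv_nth)
  have fp: "f p" unfolding f_def c_def p(2) using turn_inQ[OF T] .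
  have f0: "\<not> f 0" and fn: "\<not> f (length R - 1)" using A unfolding f_def c_def by auto
  obtain i1 where i1: "i1 < p" "\<not> f i1" "f (Suc i1)" using down[of f p] f0 fp by blast
  have "p \<noteq> length R - 1" using fp fn by auto
  then have pn: "p < length R - 1" using p(1) by linarith
  obtain i2 where i2: "p \<le> i2" "i2 < length R - 1" "f i2" "\<not> f (Suc i2)"
    using up[of f p "length R - 1"] fp fn pn by blast
  have l1: "\<bar>fst (R ! Suc i1)\<bar> = int h"
    using path_cross2[OF P h, of i1 c] i1 p(1) unfolding f_def by auto
  have l2: "\<bar>fst (R ! i2)\<bar> = int h"
    using path_cross1[OF P h, of i2 c] i2 unfolding f_def by auto
  have n1: "R ! Suc i1 \<noteq> t"
  proof
    assume "R ! Suc i1 = t"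
    moreover have "Suc i1 < length R" using i1(1) p(1) by simp
    ultimately have "R ! i1 \<in> path_nbrs R t" using nbr2[of i1 R t] by simp
    then show False using turn_nbrs[OF T] i1(2) unfolding f_def c_def by blast
  qed
  have n2: "R ! i2 \<noteq> t"
  proof
    assume "R ! i2 = t"
    moreover have "Suc i2 < length R" using i2(2) by simp
    ultimately have "R ! Suc i2 \<in> path_nbrs R t" using nbr1[of i2 R t] by simp
    then show False using turn_nbrs[OF T] i2(4) unfolding f_def c_def by blast
  qed
  have mem: "R ! Suc i1 \<in> H_vert l" "R ! i2 \<in> H_vert l" "t \<in> H_vert l"
  proof -
    have "Suc i1 < length R" "i2 < length R" using i1 i2 p by auto
    then have "R ! Suc i1 \<in> set R" "R ! i2 \<in> set R" by simp_all
    then show "R ! Suc i1 \<in> H_vert l" "R ! i2 \<in> H_vert l" "t \<in> H_vert l"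
      using sub \<open>t \<in> set R\<close> by blast+
  qed
  have q1: "inQ h c (R ! Suc i1)" using i1(3) unfolding f_def .
  have q2: "inQ h c (R ! i2)" using i2(3) unfolding f_def .
  have qt: "inQ h c t" using turn_inQ[OF T] unfolding c_def .
  have "R ! Suc i1 = R ! i2" by (rule lvl_two[OF mem q1 q2 qt l1 l2 T(2) n1 n2])
  then have "Suc i1 = i2" using dist i1 i2 p(1) by (simp add: nth_eq_iff_index_eq)
  moreover have "Suc i1 \<noteq> p" using n1 p(2) by auto
  ultimately show False using i1 i2 by linarith
qed

lemma all_in:
  assumes P: "H_path l R" and h: "1 \<le> h" "h \<le> l"
    and T1: "turn_vertex R t1" "\<bar>fst t1\<bar> = int h"
    and T2: "turn_vertex R t2" "\<bar>fst t2\<bar> = int h"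
    and ne: "t1 \<noteq> t2" and bb: "blk h t1 = c" "blk h t2 = c"
  shows "\<forall>x\<in>set R. inQ h c x"
proof -
  define f where "f k = inQ h c (R ! k)" for k
  have sub: "set R \<subseteq> H_vert l" using P unfolding H_path_def by auto
  have t12: "t1 \<in> H_vert l" "t2 \<in> H_vert l" using turn_in_set[OF T1(1)] turn_in_set[OF T2(1)] sub by auto
  have q1: "inQ h c t1" "inQ h c t2" using turn_inQ[OF T1] turn_inQ[OF T2] bb by auto
  have isT: "x = t1 \<or> x = t2" if "x \<in> H_vert l" "inQ h c x" "\<bar>fst x\<bar> = int h" for x
    using lvl_two[OF that(1) t12(2) t12(1) that(2) q1(2) q1(1) that(3) T2(2) T1(2)] ne by blast
  have nbQ: "inQ h c z" if "z \<in> path_nbrs R x" "x = t1 \<or> x = t2" for x z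
    using that(2)
  proof
    assume "x = t1" then show ?thesis using turn_nbrs[OF T1, of z] that(1) bb by simp
  next
    assume "x = t2" then show ?thesis using turn_nbrs[OF T2, of z] that(1) bb by simp
  qed
  have step: "f i = f (Suc i)" if "Suc i < length R" for i
  proof (rule ccontr)
    assume "f i \<noteq> f (Suc i)"
    then consider "f i" "\<not> f (Suc i)" | "\<not> f i" "f (Suc i)" by blast
    then show False
    proof cases
      case 1
      have "\<bar>fst (R ! i)\<bar> = int h" using path_cross1[OF P h that] 1 unfolding f_def by blast
      moreover have "R ! i \<in> set R" using that by simp
      then have "R ! i \<in> H_vert l" using sub by blast
      ultimately have "R ! i = t1 \<or> R ! i = t2" using isT 1 unfolding f_def by blast
      then show False using nbQ[OF nbr1[OF that refl]] 1 unfolding f_def by blast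
    next
      case 2
      have "\<bar>fst (R ! Suc i)\<bar> = int h" using path_cross2[OF P h that] 2 unfolding f_def by blast
      moreover have "R ! Suc i \<in> set R" using that by simp
      then have "R ! Suc i \<in> H_vert l" using sub by blast
      ultimately have "R ! Suc i = t1 \<or> R ! Suc i = t2" using isT 2 unfolding f_def by blast
      then show False using nbQ[OF nbr2[OF that refl]] 2 unfolding f_def by blast
    qed
  qed
  have all0: "\<forall>k<length R. f k = f 0"
  proof (intro allI impI)
    fix k assume "k < length R"
    then show "f k = f 0" by (induction k) (auto simp: step)
  qed
  have "t1 \<in> set R" using T1(1) by (rule turn_in_set)
  then obtain p where p: "p < length R" "R ! p = t1" by (meson in_set_conv_nth)
  have "f p" unfolding f_def p(2) using q1(1) .
  then have "\<forall>k<length R. f k" using all0 p(1) by auto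
  then show ?thesis unfolding f_def by (metis in_set_conv_nth)
qed

theorem lemma3:
  fixes l h :: nat and R :: "hvert list"
  assumes "1 \<le> l" and "H_path l R" and "1 \<le> h" and "h \<le> l"
  shows "card {v. \<bar>fst v\<bar> = int h \<and> turn_vertex R v} \<le> 2"
proof (rule ccontr)
  define T where "T = {v. \<bar>fst v\<bar> = int h \<and> turn_vertex R v}"
  assume "\<not> card {v. \<bar>fst v\<bar> = int h \<and> turn_vertex R v} \<le> 2"
  then have "3 \<le> card T" unfolding T_def by simp
  then obtain S where "S \<subseteq> T" "card S = 3" by (meson obtain_subset_with_card_n)
  then obtain x y z where S: "x \<in> T" "y \<in> T" "z \<in> T" "x \<noteq> y" "y \<noteq> z" "x \<noteq> z"
    unfolding card_3_iff by auto
  have sub: "set R \<subseteq> H_vert l" using assms(2) unfolding H_path_def by auto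
  have key: False if "a \<in> T" "b \<in> T" "d \<in> T" "a \<noteq> b" "b \<noteq> d" "a \<noteq> d" "blk h a = blk h b" for a b d
  proof -
    have ta: "turn_vertex R a" "\<bar>fst a\<bar> = int h" and tb: "turn_vertex R b" "\<bar>fst b\<bar> = int h"
      and td: "turn_vertex R d" "\<bar>fst d\<bar> = int h" using that unfolding T_def by auto
    have all: "\<forall>x\<in>set R. inQ h (blk h a) x"
      using all_in[OF assms(2) assms(3,4) ta tb that(4) refl that(7)[symmetric]] .
    have mem: "a \<in> set R" "b \<in> set R" "d \<in> set R" using turn_in_set ta(1) tb(1) td(1) by auto
    have hv: "d \<in> H_vert l" "a \<in> H_vert l" "b \<in> H_vert l" using mem sub by auto
    have "d = a" using lvl_two[OF hv, of h "blk h a"] mem all ta(2) tb(2) td(2) that(4,5) by auto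
    then show False using that(6) by simp
  qed
  have E: "inQ h (blk h t) (R ! 0) \<or> inQ h (blk h t) (R ! (length R - 1))" if "t \<in> T" for t
    using endpoint[OF assms(2) assms(3,4)] that unfolding T_def by auto
  have uq: "c = c'" if "inQ h c w" "inQ h c' w" for c c' w using that unfolding inQ_def by auto
  define g where "g t = (if inQ h (blk h t) (R ! 0) then R ! 0 else R ! (length R - 1))" for t
  have gq: "inQ h (blk h t) (g t)" if "t \<in> T" for t using E[OF that] unfolding g_def by auto
  have "g x = g y \<or> g y = g z \<or> g x = g z" unfolding g_def by auto
  then have "blk h x = blk h y \<or> blk h y = blk h z \<or> blk h x = blk h z"
    using gq[OF S(1)] gq[OF S(2)] gq[OF S(3)] uq by metis
  then show False
  proof (elim disjE)
    assume "blk h x = blk h y" then show False using key[of x y z] S by blast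
  next
    assume "blk h y = blk h z" then show False using key[of y z x] S by blast
  next
    assume "blk h x = blk h z" then show False using key[of x z y] S by blast
  qed
qed

end
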